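(* Let $P,Q,R\in D$ be non-collinear and let $m\in\mathbb{Z}_{\ge0}$ be the number of triangles inscribed in $S^1$ and circumscribing $\triangle PQR$. Then $$m=\begin{cases}0 & \text{if } \omega(P,Q,R)<1,\\ 1 & \text{if } \omega(P,Q,R)=1,\\ 2 & \text{if } \omega(P,Q,R)>1.\end{cases}$$
   Context: $D=\{(x,y)\in\mathbb{R}^2: x^2+y^2<1\}$ (Beltrami–Klein disk), $S^1$ its boundary circle. Let $D_P$ be the unit disk with Poincaré distance $d(P,Q)=\operatorname{arccosh}\left(1+\frac{2|P-Q|^2}{(1-|P|^2)(1-|Q|^2)}\right)$, and $G^{-1}:D\to D_P$, $G^{-1}(x,y)=\left(\frac{x}{1+\sqrt{1-x^2-y^2}},\frac{y}{1+\sqrt{1-x^2-y^2}}\right)$. For $P,Q\in D$, $d'(P,Q):=d(G^{-1}(P),G^{-1}(Q))$. For $P\ne Q$, $\Delta'(P,Q):=\log\frac{e^{d'(P,Q)}+1}{e^{d'(P,Q)}-1}$. $\delta(P,Q,R)$ is the minimum of $d'(R,S)$ over points $S\in D$ on the straight line through $P$ and $Q$. Define $$\omega(P,Q,R):=\frac{\delta(P,Q,R)+\delta(R,P,Q)+\delta(Q,R,P)}{\Delta'(P,Q)+\Delta'(R,P)+\Delta'(Q,R)}.$$ A triangle inscribed in $S^1$ and circumscribing $\triangle PQR$ is a Euclidean triangle with three distinct vertices on $S^1$ such that $P$, $Q$, $R$ lie on three distinct sides of it (one point on each side). *)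

theory Defs
  imports "HOL-Analysis.Analysis"
begin

definition KleinDisk :: "complex set" where
  "KleinDisk = ball 0 1"

definition circleS1 :: "complex set" where
  "circleS1 = sphere 0 1"

definition poincare_dist :: "complex \<Rightarrow> complex \<Rightarrow> real" where
  "poincare_dist P Q =
     arcosh (1 + 2 * (cmod (P - Q))\<^sup>2 / ((1 - (cmod P)\<^sup>2) * (1 - (cmod Q)\<^sup>2)))"

(* G^{-1} : Klein disk -> Poincare disk *)
definition G_inv :: "complex \<Rightarrow> complex" where
  "G_inv z = z / complex_of_real (1 + sqrt (1 - (cmod z)\<^sup>2))"

definition klein_dist :: "complex \<Rightarrow> complex \<Rightarrow> real" where
  "klein_dist P Q = poincare_dist (G_inv P) (G_inv Q)"

definition Delta' :: "complex \<Rightarrow> complex \<Rightarrow> real" where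
  "Delta' P Q = ln ((exp (klein_dist P Q) + 1) / (exp (klein_dist P Q) - 1))"

definition line_through :: "complex \<Rightarrow> complex \<Rightarrow> complex set" where
  "line_through P Q = {P + complex_of_real t * (Q - P) | t. True}"

definition delta :: "complex \<Rightarrow> complex \<Rightarrow> complex \<Rightarrow> real" where
  "delta P Q R = (INF S \<in> line_through P Q \<inter> KleinDisk. klein_dist R S)"

definition omega :: "complex \<Rightarrow> complex \<Rightarrow> complex \<Rightarrow> real" where
  "omega P Q R = (delta P Q R + delta R P Q + delta Q R P) /
                 (Delta' P Q + Delta' R P + Delta' Q R)"

definition circ_inscribed_triangles :: "complex \<Rightarrow> complex \<Rightarrow> complex \<Rightarrow> complex set set" where
  "circ_inscribed_triangles P Q R =
     {T. \<exists>A B C. T = {A, B, C} \<and> A \<noteq> B \<and> B \<noteq> C \<and> A \<noteq> C \<and>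
          A \<in> circleS1 \<and> B \<in> circleS1 \<and> C \<in> circleS1 \<and>
          P \<in> closed_segment A B \<and> Q \<in> closed_segment B C \<and> R \<in> closed_segment C A}"

end

theory Submission
  imports Defs
begin

definition fP :: "complex \<Rightarrow> complex \<Rightarrow> complex" where
  "fP P A = (P - A) / (1 - cnj P * A)"

lemma circ_cnj: "cmod A = 1 \<Longrightarrow> cnj A * A = 1"
  by (metis complex_norm_square mult.commute of_real_1 power_one)

lemma fP_den: assumes "cmod A = 1" "cmod P < 1" shows "1 - cnj P * A \<noteq> 0"
proof
  assume "1 - cnj P * A = 0"
  hence "cnj P * A = 1" by simp
  hence "cmod (cnj P * A) = 1" by simp
  thus False using assms by (simp add: norm_mult)
qed

lemma fP_norm: assumes "cmod A = 1" "cmod P < 1" shows "cmod (fP P A) = 1"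
proof -
  have "1 - cnj P * A = (cnj A - cnj P) * A" using circ_cnj[OF assms(1)] by (simp add: algebra_simps)
  hence "cmod (1 - cnj P * A) = cmod (P - A)"
    using assms(1) by (metis complex_cnj_diff complex_mod_cnj norm_minus_commute norm_mult mult.right_neutral)
  moreover have "P \<noteq> A" using assms by auto
  ultimately show ?thesis using fP_den[OF assms] by (simp add: fP_def norm_divide)
qed

lemma fP_inv: assumes "cmod A = 1" "cmod P < 1" shows "fP P (fP P A) = A"
proof -
  have w: "1 - cnj P * A \<noteq> 0" using fP_den[OF assms] .
  have pp: "1 - cnj P * P \<noteq> 0"
  proof
    assume "1 - cnj P * P = 0"
    hence "cmod (cnj P * P) = 1" by (metis eq_iff_diff_eq_0 norm_one)
    thus False using assms(2) by (simp add: norm_mult) (metis abs_norm_cancel less_irrefl mult_strict_mono' norm_ge_zero mult_1 assms(2))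
  qed
  have e1: "P - (P - A) / (1 - cnj P * A) = A * (1 - cnj P * P) / (1 - cnj P * A)"
    using w by (simp add: field_simps)
  have e2: "1 - cnj P * ((P - A) / (1 - cnj P * A)) = (1 - cnj P * P) / (1 - cnj P * A)"
    using w by (simp add: field_simps)
  have "fP P (fP P A) = (A * (1 - cnj P * P) / (1 - cnj P * A)) / ((1 - cnj P * P) / (1 - cnj P * A))"
    unfolding fP_def e1 e2 ..
  also have "\<dots> = A * (1 - cnj P * P) / (1 - cnj P * P)" using w by simp
  also have "\<dots> = A" using pp by simp
  finally show ?thesis .
qed

lemma fP_neq: assumes "cmod A = 1" "cmod P < 1" shows "fP P A \<noteq> A"
proof
  assume h: "fP P A = A"
  have w: "1 - cnj P * A \<noteq> 0" using fP_den[OF assms] .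
  hence "P - A = A * (1 - cnj P * A)" using h by (simp add: fP_def field_simps)
  hence "cnj A * (P - A) = cnj A * A * (1 - cnj P * A)" by simp
  hence "cnj A * P - cnj A * A = cnj A * A - cnj P * A * (cnj A * A)" by (simp add: algebra_simps)
  hence "cnj A * P + cnj P * A = 2" using circ_cnj[OF assms(1)] by simp
  hence "Re (cnj A * P) + Re (cnj P * A) = 2" by (metis Re_complex_of_real numeral_One of_real_numeral plus_complex.sel(1))
  moreover have "Re (cnj A * P) = Re (cnj P * A)" by simp
  moreover have "Re (cnj P * A) \<le> cmod (cnj P * A)" by (rule complex_Re_le_cmod)
  moreover have "cmod (cnj P * A) < 1" using assms by (simp add: norm_mult)
  ultimately show False by linarith
qed

lemma fP_inj: assumes "cmod A = 1" "cmod B = 1" "cmod P < 1" "fP P A = fP P B" shows "A = B"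
  using fP_inv[OF assms(1,3)] fP_inv[OF assms(2,3)] assms(4) by metis

lemma seg_imp_fP: assumes "cmod A = 1" "cmod B = 1" "cmod P < 1" "P \<in> closed_segment A B"
  shows "B = fP P A"
proof -
  obtain u where u: "P = (1 - u) *\<^sub>R A + u *\<^sub>R B" using assms(4) unfolding closed_segment_def by auto
  have P: "P = (1 - of_real u) * A + of_real u * B" using u by (simp add: scaleR_conv_of_real)
  have cP: "cnj P = (1 - of_real u) * cnj A + of_real u * cnj B" using P by simp
  have a: "cnj A * A = 1" and b: "cnj B * B = 1" using circ_cnj assms by auto
  have "B * (1 - cnj P * A) = P - A" unfolding cP using a b unfolding P by algebra
  thus ?thesis using fP_den[OF assms(1,3)] by (simp add: fP_def field_simps)
qed

lemma fP_imp_seg: assumes "cmod A = 1" "cmod P < 1" "B = fP P A"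
  shows "P \<in> closed_segment A B"
proof -
  define w where "w = 1 - cnj P * A"
  have w0: "w \<noteq> 0" using fP_den[OF assms(1,2)] w_def by simp
  have Bw: "B * w = P - A" using assms(3) w0 unfolding fP_def w_def by simp
  have a: "cnj A * A = 1" using circ_cnj assms by auto
  have cwA: "cnj w * A = A - P" unfolding w_def using a by (simp add: algebra_simps)
  have rew: "Re w > 0"
  proof -
    have "Re (cnj P * A) \<le> cmod (cnj P * A)" by (rule complex_Re_le_cmod)
    moreover have "cmod (cnj P * A) < 1" using assms by (simp add: norm_mult)
    ultimately show ?thesis unfolding w_def by simp
  qed
  define u where "u = (cmod w)^2 / (2 * Re w)"
  have u0: "0 \<le> u" unfolding u_def using rew by simp
  have "(cmod w)^2 \<le> 2 * Re w"
  proof -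
    have "cmod (1 - w) = cmod (cnj P * A)" unfolding w_def by simp
    also have "\<dots> < 1" using assms by (simp add: norm_mult)
    finally have "(cmod (1 - w))^2 \<le> 1" by (simp add: power_le_one)
    hence "(1 - Re w)^2 + (Im w)^2 \<le> 1" unfolding cmod_power2 by simp
    thus ?thesis unfolding cmod_power2 by (simp add: power2_eq_square algebra_simps)
  qed
  hence u1: "u \<le> 1" unfolding u_def using rew by simp
  have wc: "w + cnj w = of_real (2 * Re w)" by (simp add: complex_add_cnj)
  have ww: "w * cnj w = of_real ((cmod w)^2)" by (simp add: complex_norm_square[symmetric])
  have uu: "of_real u * (w + cnj w) = w * cnj w" unfolding wc ww u_def using rew
    by (simp add: field_simps)
  have wcw0: "w + cnj w \<noteq> 0" unfolding wc using rew by simp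
  have "(P - ((1 - of_real u) * A + of_real u * B)) * ((w + cnj w) * w) = 0"
  proof -
    have "(P - ((1 - of_real u) * A + of_real u * B)) * ((w + cnj w) * w)
        = (P - A) * (w + cnj w) * w - (of_real u * (w + cnj w)) * (B * w - A * w)"
      by (simp add: algebra_simps)
    also have "\<dots> = (P - A) * (w + cnj w) * w - (w * cnj w) * (P - A - A * w)"
      unfolding uu Bw ..
    also have "\<dots> = w * w * ((P - A) + cnj w * A)" by (simp add: algebra_simps)
    also have "\<dots> = 0" unfolding cwA by simp
    finally show ?thesis .
  qed
  hence "P = (1 - of_real u) * A + of_real u * B" using w0 wcw0 by simp
  hence "P = (1 - u) *\<^sub>R A + u *\<^sub>R B" by (simp add: scaleR_conv_of_real)
  thus ?thesis unfolding closed_segment_def using u0 u1 by auto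
qed

definition FixS :: "complex \<Rightarrow> complex \<Rightarrow> complex \<Rightarrow> complex set" where
  "FixS P Q R = {A. cmod A = 1 \<and> fP R (fP Q (fP P A)) = A}"

definition tri_of :: "complex \<Rightarrow> complex \<Rightarrow> complex \<Rightarrow> complex set" where
  "tri_of P Q A = {A, fP P A, fP Q (fP P A)}"

lemma seg_iff: assumes "cmod A = 1" "cmod B = 1" "cmod P < 1"
  shows "P \<in> closed_segment A B \<longleftrightarrow> B = fP P A"
  using seg_imp_fP[OF assms] fP_imp_seg[OF assms(1,3)] by blast

lemma circ_eq: assumes "cmod P < 1" "cmod Q < 1" "cmod R < 1"
  shows "circ_inscribed_triangles P Q R = tri_of P Q ` FixS P Q R"
proof
  show "circ_inscribed_triangles P Q R \<subseteq> tri_of P Q ` FixS P Q R"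
  proof
    fix T assume "T \<in> circ_inscribed_triangles P Q R"
    then obtain A B C where T: "T = {A, B, C}" and n0: "A \<in> circleS1" "B \<in> circleS1" "C \<in> circleS1"
      and s: "P \<in> closed_segment A B" "Q \<in> closed_segment B C" "R \<in> closed_segment C A"
      unfolding circ_inscribed_triangles_def mem_Collect_eq by blast
    have n: "cmod A = 1" "cmod B = 1" "cmod C = 1" using n0 unfolding circleS1_def by auto
    have B: "B = fP P A" using seg_iff[OF n(1) n(2) assms(1)] s(1) by simp
    have C: "C = fP Q B" using seg_iff[OF n(2) n(3) assms(2)] s(2) by simp
    have A: "A = fP R C" using seg_iff[OF n(3) n(1) assms(3)] s(3) by simp
    have "A \<in> FixS P Q R" unfolding FixS_def using n(1) by (simp add: B[symmetric] C[symmetric] A[symmetric])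
    moreover have "T = tri_of P Q A" unfolding T tri_of_def B C ..
    ultimately show "T \<in> tri_of P Q ` FixS P Q R" by blast
  qed
next
  show "tri_of P Q ` FixS P Q R \<subseteq> circ_inscribed_triangles P Q R"
  proof
    fix T assume "T \<in> tri_of P Q ` FixS P Q R"
    then obtain A where A: "cmod A = 1" "fP R (fP Q (fP P A)) = A" and T: "T = tri_of P Q A"
      unfolding FixS_def by auto
    define B where "B = fP P A"
    define C where "C = fP Q B"
    have nB: "cmod B = 1" unfolding B_def using fP_norm A assms by auto
    have nC: "cmod C = 1" unfolding C_def using fP_norm nB assms by auto
    have AC: "A = fP R C" using A unfolding B_def C_def by simp
    have d1: "A \<noteq> B" unfolding B_def using fP_neq A assms by metis
    have d2: "B \<noteq> C" unfolding C_def using fP_neq nB assms by metis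
    have d3: "A \<noteq> C" using AC fP_neq nC assms by metis
    have "P \<in> closed_segment A B" using seg_iff[OF A(1) nB assms(1)] B_def by simp
    moreover have "Q \<in> closed_segment B C" using seg_iff[OF nB nC assms(2)] C_def by simp
    moreover have "R \<in> closed_segment C A" using seg_iff[OF nC A(1) assms(3)] AC by simp
    moreover have "T = {A, B, C}" unfolding T tri_of_def B_def C_def ..
    moreover have "A \<in> circleS1" "B \<in> circleS1" "C \<in> circleS1" unfolding circleS1_def using A nB nC by auto
    ultimately show "T \<in> circ_inscribed_triangles P Q R"
      unfolding circ_inscribed_triangles_def using d1 d2 d3 by blast
  qed
qed

lemma tri_inj: assumes "cmod P < 1" "cmod Q < 1" "cmod R < 1"
  shows "inj_on (tri_of P Q) (FixS P Q R)"
proof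
  fix A1 A2 assume a1: "A1 \<in> FixS P Q R" and a2: "A2 \<in> FixS P Q R" and eq: "tri_of P Q A1 = tri_of P Q A2"
  define B1 where "B1 = fP P A1" define C1 where "C1 = fP Q B1"
  define B2 where "B2 = fP P A2" define C2 where "C2 = fP Q B2"
  have n1: "cmod A1 = 1" "fP R C1 = A1" using a1 unfolding FixS_def B1_def C1_def by auto
  have n2: "cmod A2 = 1" "fP R C2 = A2" using a2 unfolding FixS_def B2_def C2_def by auto
  have nB1: "cmod B1 = 1" unfolding B1_def using fP_norm n1 assms by auto
  have nC1: "cmod C1 = 1" unfolding C1_def using fP_norm nB1 assms by auto
  have nB2: "cmod B2 = 1" unfolding B2_def using fP_norm n2 assms by auto
  have nC2: "cmod C2 = 1" unfolding C2_def using fP_norm nB2 assms by auto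
  have dA1B1: "A1 \<noteq> B1" unfolding B1_def using fP_neq n1 assms by metis
  have dB1C1: "B1 \<noteq> C1" unfolding C1_def using fP_neq nB1 assms by metis
  have dA1C1: "A1 \<noteq> C1" using n1 fP_neq nC1 assms by metis
  have dA2B2: "A2 \<noteq> B2" unfolding B2_def using fP_neq n2 assms by metis
  have dB2C2: "B2 \<noteq> C2" unfolding C2_def using fP_neq nB2 assms by metis
  have dA2C2: "A2 \<noteq> C2" using n2 fP_neq nC2 assms by metis
  have S: "{A1, B1, C1} = {A2, B2, C2}" using eq unfolding tri_of_def B1_def C1_def B2_def C2_def .
  have mA: "A2 = A1 \<or> A2 = B1 \<or> A2 = C1" using S by (metis insertCI insertE singletonD)
  have mB: "B2 = A1 \<or> B2 = B1 \<or> B2 = C1" using S by (metis insertCI insertE singletonD)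
  have mC: "C2 = A1 \<or> C2 = B1 \<or> C2 = C1" using S by (metis insertCI insertE singletonD)
  show "A1 = A2"
  proof (rule ccontr)
    assume ne: "A1 \<noteq> A2"
    have "A2 = B1 \<or> A2 = C1" using mA ne by metis
    thus False
    proof
      assume h: "A2 = B1"
      have hB: "B2 = A1" unfolding B2_def h B1_def using fP_inv[OF n1(1) assms(1)] .
      have "C2 = C1" using mC dB2C2 dA2C2 h hB by metis
      hence "fP Q A1 = fP Q B1" unfolding C2_def C1_def hB .
      hence "A1 = B1" using fP_inj[OF n1(1) nB1 assms(2)] by blast
      thus False using dA1B1 by simp
    next
      assume h: "A2 = C1"
      have i1: "fP R C1 = A1" using n1(2) .
      have "fP R A2 = C2" using n2(2) fP_inv[OF nC2 assms(3)] by metis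
      hence hC: "C2 = A1" using h i1 by metis
      have "B2 = B1" using mB dA2B2 dB2C2 h hC by metis
      hence "fP P C1 = fP P A1" unfolding B2_def B1_def h .
      hence "C1 = A1" using fP_inj[OF nC1 n1(1) assms(1)] by blast
      thus False using dA1C1 by simp
    qed
  qed
qed

definition gam :: "complex \<Rightarrow> complex \<Rightarrow> complex \<Rightarrow> complex" where
  "gam P Q R = cnj (P - Q + R - R * cnj Q * P)"

definition kk :: "complex \<Rightarrow> complex \<Rightarrow> complex \<Rightarrow> real" where
  "kk P Q R = 1 - Re (Q * cnj P) + Re (R * cnj P) - Re (R * cnj Q)"

lemma kk_complex: "complex_of_real (kk P Q R) =
   1 - (Q * cnj P + cnj Q * P)/2 + (R * cnj P + cnj R * P)/2 - (R * cnj Q + cnj R * Q)/2"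
proof -
  have r: "\<And>z. complex_of_real (Re z) = (z + cnj z)/2" by (simp add: complex_add_cnj)
  show ?thesis unfolding kk_def of_real_diff of_real_add of_real_1 r by (simp add: algebra_simps)
qed

lemma fix_iff: assumes "cmod A = 1" "cmod P < 1" "cmod Q < 1" "cmod R < 1"
  shows "fP R (fP Q (fP P A)) = A \<longleftrightarrow> Re (gam P Q R * A) = kk P Q R"
proof -
  define B where "B = fP P A"
  define C where "C = fP Q B"
  define d1 where "d1 = 1 - cnj P * A"
  define d2 where "d2 = 1 - cnj Q * B"
  define d3 where "d3 = 1 - cnj R * C"
  have nB: "cmod B = 1" unfolding B_def using fP_norm assms by auto
  have nC: "cmod C = 1" unfolding C_def using fP_norm nB assms by auto
  have d10: "d1 \<noteq> 0" unfolding d1_def using fP_den assms by auto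
  have d20: "d2 \<noteq> 0" unfolding d2_def using fP_den nB assms by auto
  have d30: "d3 \<noteq> 0" unfolding d3_def using fP_den nC assms by auto
  have hB: "B * d1 = P - A" unfolding B_def fP_def d1_def using d10 d1_def by simp
  have hC: "C * d2 = Q - B" unfolding C_def fP_def d2_def using d20 d2_def by simp
  have aa: "cnj A * A = 1" using circ_cnj assms by auto
  have A0: "A \<noteq> 0" using assms by auto
  define g where "g = gam P Q R"
  define k where "k = kk P Q R"
  have gdef: "g = cnj P - cnj Q + cnj R - cnj R * Q * cnj P" unfolding g_def gam_def by simp
  have cgdef: "cnj g = P - Q + R - R * cnj Q * P" unfolding g_def gam_def by simp
  have kdef: "complex_of_real k = 1 - (Q * cnj P + cnj Q * P)/2 + (R * cnj P + cnj R * P)/2 - (R * cnj Q + cnj R * Q)/2"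
    unfolding k_def by (rule kk_complex)
  have k2: "2 * complex_of_real k = 2 - (Q * cnj P + cnj Q * P) + (R * cnj P + cnj R * P) - (R * cnj Q + cnj R * Q)"
    unfolding kdef by (simp add: field_simps)
  have dd: "d2 * d1 = d1 - cnj Q * (P - A)" unfolding d2_def hB[symmetric] by (simp add: algebra_simps)
  have "(R - C - A * d3) * d2 * d1 = R * (d2 * d1) - (C * d2) * d1 + A * cnj R * (C * d2) * d1 - A * (d2 * d1)"
    unfolding d3_def by (simp add: algebra_simps)
  also have "\<dots> = R * (d2 * d1) - Q * d1 + B * d1 + A * cnj R * Q * d1 - A * cnj R * (B * d1) - A * (d2 * d1)"
    unfolding hC by (simp add: algebra_simps)
  also have "\<dots> = R * (d1 - cnj Q * (P - A)) - Q * d1 + (P - A) + A * cnj R * Q * d1 - A * cnj R * (P - A) - A * (d1 - cnj Q * (P - A))"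
    unfolding hB dd ..
  also have "\<dots> = g * A^2 - (2 * complex_of_real k) * A + cnj g"
    unfolding k2 gdef d1_def complex_cnj_diff complex_cnj_add complex_cnj_mult complex_cnj_cnj by algebra
  finally have G: "(R - C - A * d3) * d2 * d1 = g * A^2 - 2 * complex_of_real k * A + cnj g" .
  have G2: "g * A^2 - 2 * complex_of_real k * A + cnj g = 2 * A * complex_of_real (Re (g * A) - k)"
  proof -
    have r: "2 * complex_of_real (Re (g * A)) = g * A + cnj g * cnj A"
    proof -
      have "g * A + cnj (g * A) = complex_of_real (2 * Re (g * A))" by (rule complex_add_cnj)
      thus ?thesis by simp
    qed
    have "2 * A * complex_of_real (Re (g * A) - k) = A * (2 * complex_of_real (Re (g * A))) - 2 * complex_of_real k * A"
      by (simp add: algebra_simps)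
    also have "\<dots> = g * A * A + cnj g * (cnj A * A) - 2 * complex_of_real k * A"
      unfolding r by (simp add: algebra_simps)
    also have "\<dots> = g * A^2 - 2 * complex_of_real k * A + cnj g"
      unfolding aa by (simp add: power2_eq_square)
    finally show ?thesis by simp
  qed
  have "fP R C = A \<longleftrightarrow> R - C - A * d3 = 0"
    unfolding fP_def d3_def[symmetric] using d30 by (auto simp: field_simps)
  also have "\<dots> \<longleftrightarrow> (R - C - A * d3) * d2 * d1 = 0" using d10 d20 by simp
  also have "\<dots> \<longleftrightarrow> Re (g * A) - k = 0" unfolding G G2 using A0 by (simp only: mult_eq_0_iff of_real_eq_0_iff) simp
  also have "\<dots> \<longleftrightarrow> Re (g * A) = k" by linarith
  finally show ?thesis unfolding B_def C_def g_def k_def .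
qed

lemma W_card: fixes r k :: real assumes r: "r \<ge> 0"
  shows "finite {w. cmod w = r \<and> Re w = k} \<and>
    card {w. cmod w = r \<and> Re w = k} = (if r^2 < k^2 then 0 else if r^2 = k^2 then 1 else 2)"
proof -
  have mem: "\<And>w. (cmod w = r \<and> Re w = k) \<longleftrightarrow> (Re w = k \<and> (Im w)^2 = r^2 - k^2)"
  proof -
    fix w
    have "cmod w = r \<longleftrightarrow> (cmod w)^2 = r^2" using r by (metis norm_ge_zero power2_eq_iff_nonneg)
    thus "(cmod w = r \<and> Re w = k) \<longleftrightarrow> (Re w = k \<and> (Im w)^2 = r^2 - k^2)"
      unfolding cmod_power2 by auto
  qed
  show ?thesis
  proof (cases "r^2 < k^2")
    case True
    have "{w. cmod w = r \<and> Re w = k} = {}"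
    proof -
      have "\<And>w. \<not> (Re w = k \<and> (Im w)^2 = r^2 - k^2)" using True
        by (metis diff_less_0_iff_less not_less zero_le_power2)
      thus ?thesis using mem by blast
    qed
    thus ?thesis using True by (simp only: finite.emptyI card.empty) simp
  next
    case False
    show ?thesis
    proof (cases "r^2 = k^2")
      case True
      have "{w. cmod w = r \<and> Re w = k} = {Complex k 0}"
      proof -
        have "\<And>w. (Re w = k \<and> (Im w)^2 = r^2 - k^2) \<longleftrightarrow> w = Complex k 0"
          using True by (simp add: complex_eq_iff)
        thus ?thesis using mem by blast
      qed
      thus ?thesis using True by simp
    next
      case F2: False
      define h where "h = sqrt (r^2 - k^2)"
      have hpos: "h > 0" unfolding h_def using False F2 by simp
      have hsq: "h^2 = r^2 - k^2" unfolding h_def using False by simp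
      have "{w. cmod w = r \<and> Re w = k} = {Complex k h, Complex k (-h)}"
      proof -
        have "\<And>w. (Re w = k \<and> (Im w)^2 = r^2 - k^2) \<longleftrightarrow> (w = Complex k h \<or> w = Complex k (-h))"
        proof -
          fix w
          have "(Im w)^2 = h^2 \<longleftrightarrow> Im w = h \<or> Im w = -h"
            by (metis power2_eq_iff)
          thus "(Re w = k \<and> (Im w)^2 = r^2 - k^2) \<longleftrightarrow> (w = Complex k h \<or> w = Complex k (-h))"
            unfolding hsq[symmetric] by (auto simp: complex_eq_iff)
        qed
        thus ?thesis using mem by blast
      qed
      moreover have "Complex k h \<noteq> Complex k (-h)" using hpos by simp
      ultimately show ?thesis using False F2 by simp
    qed
  qed
qed

lemma S_card: fixes g :: complex and k :: real
  assumes "g \<noteq> 0 \<or> k \<noteq> 0"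
  shows "finite {A. cmod A = 1 \<and> Re (g * A) = k} \<and>
    card {A. cmod A = 1 \<and> Re (g * A) = k} = (if (cmod g)^2 < k^2 then 0 else if (cmod g)^2 = k^2 then 1 else 2)"
proof (cases "g = 0")
  case True
  hence "k \<noteq> 0" using assms by simp
  hence "{A. cmod A = 1 \<and> Re (g * A) = k} = {}" using True by auto
  thus ?thesis using True \<open>k \<noteq> 0\<close> by simp
next
  case False
  have bij: "bij_betw (\<lambda>A. g * A) {A. cmod A = 1 \<and> Re (g * A) = k} {w. cmod w = cmod g \<and> Re w = k}"
  proof (rule bij_betwI[where g = "\<lambda>w. w / g"])
    show "(\<lambda>A. g * A) \<in> {A. cmod A = 1 \<and> Re (g * A) = k} \<rightarrow> {w. cmod w = cmod g \<and> Re w = k}"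
      by (auto simp: norm_mult)
    show "(\<lambda>w. w / g) \<in> {w. cmod w = cmod g \<and> Re w = k} \<rightarrow> {A. cmod A = 1 \<and> Re (g * A) = k}"
    proof
      fix w assume "w \<in> {w. cmod w = cmod g \<and> Re w = k}"
      hence w1: "cmod w = cmod g" "Re w = k" by auto
      have e: "g * (w / g) = w" using False by simp
      have "cmod (w / g) = 1" using w1 False by (simp add: norm_divide)
      moreover have "Re (g * (w / g)) = k" unfolding e using w1 by simp
      ultimately show "w / g \<in> {A. cmod A = 1 \<and> Re (g * A) = k}" by blast
    qed
    show "\<And>x. x \<in> {A. cmod A = 1 \<and> Re (g * A) = k} \<Longrightarrow> g * x / g = x" using False by simp
    show "\<And>y. y \<in> {w. cmod w = cmod g \<and> Re w = k} \<Longrightarrow> g * (y / g) = y" using False by simp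
  qed
  show ?thesis using W_card[of "cmod g" k] bij_betw_finite[OF bij] bij_betw_same_card[OF bij] by simp
qed

definition tri :: "complex \<Rightarrow> complex \<Rightarrow> complex \<Rightarrow> real" where
  "tri P Q R = Im (cnj P * Q) + Im (cnj Q * R) + Im (cnj R * P)"

definition Pi3 :: "complex \<Rightarrow> complex \<Rightarrow> complex \<Rightarrow> real" where
  "Pi3 P Q R = (1 - (cmod P)^2) * (1 - (cmod Q)^2) * (1 - (cmod R)^2)"

lemma gk_ident: "(cmod (gam P Q R))^2 - (kk P Q R)^2 = (tri P Q R)^2 - Pi3 P Q R"
proof -
  obtain p1 p2 where P: "P = Complex p1 p2" by (metis complex.exhaust)
  obtain q1 q2 where Q: "Q = Complex q1 q2" by (metis complex.exhaust)
  obtain r1 r2 where R: "R = Complex r1 r2" by (metis complex.exhaust)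
  show ?thesis unfolding P Q R gam_def kk_def tri_def Pi3_def cmod_power2
    by (simp add: power2_eq_square algebra_simps)
qed

lemma gk_nz: assumes "cmod P < 1" "cmod Q < 1"
  shows "gam P Q R \<noteq> 0 \<or> kk P Q R \<noteq> 0"
proof (rule ccontr)
  assume "\<not> ?thesis"
  hence g0: "gam P Q R = 0" and k0: "kk P Q R = 0" by auto
  obtain p1 p2 where P: "P = Complex p1 p2" by (metis complex.exhaust)
  obtain q1 q2 where Q: "Q = Complex q1 q2" by (metis complex.exhaust)
  obtain r1 r2 where R: "R = Complex r1 r2" by (metis complex.exhaust)
  define u1 where "u1 = 1 - (q1 * p1 + q2 * p2)"
  define u2 where "u2 = q2 * p1 - q1 * p2"
  have e1: "r1 * u1 - r2 * u2 = q1 - p1" and e2: "r1 * u2 + r2 * u1 = q2 - p2"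
    using g0 unfolding P Q R gam_def u1_def u2_def by (simp_all add: complex_eq_iff algebra_simps)
  have kd: "kk P Q R = 1 - (q1 * p1 + q2 * p2) + (r1 * p1 + r2 * p2) - (r1 * q1 + r2 * q2)"
    unfolding P Q R kk_def by simp
  have id: "kk P Q R * (u1^2 + u2^2) = u1 * ((u1^2 + u2^2) - ((q1 - p1)^2 + (q2 - p2)^2))"
    unfolding kd using e1 e2 unfolding u1_def u2_def by algebra
  have pp: "p1^2 + p2^2 < 1" and qq: "q1^2 + q2^2 < 1" using assms unfolding P Q
    by (simp_all add: cmod_def)
  have id2: "(u1^2 + u2^2) - ((q1 - p1)^2 + (q2 - p2)^2) = (1 - (p1^2 + p2^2)) * (1 - (q1^2 + q2^2))"
    unfolding u1_def u2_def by algebra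
  have pos2: "(u1^2 + u2^2) - ((q1 - p1)^2 + (q2 - p2)^2) > 0" unfolding id2 using pp qq by simp
  have "(q1 * p1 + q2 * p2)^2 \<le> (p1^2 + p2^2) * (q1^2 + q2^2)"
  proof -
    have "(p1^2 + p2^2) * (q1^2 + q2^2) - (q1 * p1 + q2 * p2)^2 = (p1 * q2 - p2 * q1)^2" by algebra
    thus ?thesis by (smt (verit) zero_le_power2)
  qed
  moreover have "(p1^2 + p2^2) * (q1^2 + q2^2) < 1"
    using pp qq by (smt (verit) mult_le_one sum_squares_ge_zero mult_strict_mono zero_le_power2)
  ultimately have "(q1 * p1 + q2 * p2)^2 < 1" by linarith
  hence "q1 * p1 + q2 * p2 < 1" by (smt (verit) one_le_power)
  hence u1pos: "u1 > 0" unfolding u1_def by simp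
  have "u1^2 + u2^2 > 0" using u1pos by (smt (verit) zero_le_power2 zero_less_power2)
  hence "kk P Q R * (u1^2 + u2^2) > 0" unfolding id using u1pos pos2 by simp
  thus False using k0 by simp
qed

definition dotc :: "complex \<Rightarrow> complex \<Rightarrow> real" where
  "dotc X Y = Re X * Re Y + Im X * Im Y"

lemma aux_frac: fixes S T p q k :: real
  assumes "S \<noteq> 0" "T \<noteq> 0" "p \<noteq> 0" "q \<noteq> 0"
  shows "1 + 2*(S*T*(2 - 2*p*q - 2*k)/(S^2*T^2)) / ((2*p/S)*(2*q/T)) = (1 - k)/(p*q)"
  using assms by (simp add: field_simps power2_eq_square)

lemma real_core0: fixes a b c d S T :: real
  assumes S1: "S > 1" and T1: "T > 1" and ss: "(S-1)^2 = 1 - a^2 - b^2" and tt: "(T-1)^2 = 1 - c^2 - d^2"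
  shows "1 + 2*((a/S - c/T)^2 + (b/S - d/T)^2) /
     ((1 - ((a/S)^2 + (b/S)^2)) * (1 - ((c/T)^2 + (d/T)^2))) = (1 - (a*c + b*d)) / ((S-1)*(T-1))"
proof -
  have S0: "S \<noteq> 0" "S - 1 \<noteq> 0" and T0: "T \<noteq> 0" "T - 1 \<noteq> 0" using S1 T1 by auto
  have ab: "a^2 + b^2 = 2*S - S^2" using ss by (simp add: power2_eq_square algebra_simps)
  have cd: "c^2 + d^2 = 2*T - T^2" using tt by (simp add: power2_eq_square algebra_simps)
  have e1: "1 - ((a/S)^2 + (b/S)^2) = 2*(S-1)/S"
  proof -
    have "(a/S)^2 + (b/S)^2 = (a^2+b^2)/S^2" by (simp add: power_divide add_divide_distrib)
    thus ?thesis using S0 ab by (simp add: field_simps power2_eq_square) algebra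
  qed
  have e2: "1 - ((c/T)^2 + (d/T)^2) = 2*(T-1)/T"
  proof -
    have "(c/T)^2 + (d/T)^2 = (c^2+d^2)/T^2" by (simp add: power_divide add_divide_distrib)
    thus ?thesis using T0 cd by (simp add: field_simps power2_eq_square) algebra
  qed
  have e3: "(a/S - c/T)^2 + (b/S - d/T)^2
     = ((a^2+b^2)*T^2 + (c^2+d^2)*S^2 - 2*(a*c+b*d)*S*T) / (S^2*T^2)"
    using S0 T0 by (simp add: field_simps power2_eq_square)
  have e4: "(a^2+b^2)*T^2 + (c^2+d^2)*S^2 - 2*(a*c+b*d)*S*T
     = S*T*(2 - 2*(S-1)*(T-1) - 2*(a*c+b*d))"
    unfolding ab cd by algebra
  show ?thesis unfolding e1 e2 e3 e4 by (rule aux_frac) (use S0 T0 in auto)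
qed

lemma klein_cosh: assumes X: "cmod X < 1" and Y: "cmod Y < 1"
  shows "cosh (klein_dist X Y) = (1 - dotc X Y) / (sqrt (1 - (cmod X)^2) * sqrt (1 - (cmod Y)^2))"
    and "klein_dist X Y \<ge> 0"
proof -
  define s where "s = sqrt (1 - (cmod X)^2)"
  define t where "t = sqrt (1 - (cmod Y)^2)"
  have xx: "(cmod X)^2 < 1" using X by (simp add: abs_square_less_1)
  have yy: "(cmod Y)^2 < 1" using Y by (simp add: abs_square_less_1)
  have s0: "s > 0" unfolding s_def using xx by simp
  have t0: "t > 0" unfolding t_def using yy by simp
  have ss: "((1+s)-1)^2 = 1 - (Re X)^2 - (Im X)^2" unfolding s_def using xx by (simp add: cmod_power2)
  have tt: "((1+t)-1)^2 = 1 - (Re Y)^2 - (Im Y)^2" unfolding t_def using yy by (simp add: cmod_power2)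
  define u where "u = G_inv X"
  define w where "w = G_inv Y"
  have u: "u = X / complex_of_real (1 + s)" unfolding u_def G_inv_def s_def ..
  have w: "w = Y / complex_of_real (1 + t)" unfolding w_def G_inv_def t_def ..
  have Reu: "Re u = Re X / (1 + s)" and Imu: "Im u = Im X / (1 + s)" unfolding u
    by (simp_all add: Re_divide_of_real Im_divide_of_real)
  have Rew: "Re w = Re Y / (1 + t)" and Imw: "Im w = Im Y / (1 + t)" unfolding w
    by (simp_all add: Re_divide_of_real Im_divide_of_real)
  define v where "v = 1 + 2 * (cmod (u - w))^2 / ((1 - (cmod u)^2) * (1 - (cmod w)^2))"
  have kd: "klein_dist X Y = arcosh v"
    unfolding klein_dist_def poincare_dist_def v_def u_def w_def ..
  have cu: "cmod u < 1" unfolding u norm_divide norm_of_real using X s0 by simp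
  have cw: "cmod w < 1" unfolding w norm_divide norm_of_real using Y t0 by simp
  have "(1 - (cmod u)^2) * (1 - (cmod w)^2) > 0" using cu cw
    by (simp add: abs_square_less_1)
  hence v1: "v \<ge> 1" unfolding v_def by simp
  have "v = 1 + 2*((Re X/(1+s) - Re Y/(1+t))^2 + (Im X/(1+s) - Im Y/(1+t))^2) /
     ((1 - ((Re X/(1+s))^2 + (Im X/(1+s))^2)) * (1 - ((Re Y/(1+t))^2 + (Im Y/(1+t))^2)))"
    unfolding v_def cmod_power2 by (simp add: Reu Imu Rew Imw)
  also have "\<dots> = (1 - (Re X * Re Y + Im X * Im Y)) / (((1+s)-1)*((1+t)-1))"
    by (rule real_core0) (use s0 t0 ss tt in auto)
  finally have "v = (1 - dotc X Y) / (s * t)" unfolding dotc_def by simp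
  thus "cosh (klein_dist X Y) = (1 - dotc X Y) / (sqrt (1 - (cmod X)^2) * sqrt (1 - (cmod Y)^2))"
    unfolding kd using v1 s_def t_def by simp
  show "klein_dist X Y \<ge> 0" unfolding kd using v1 by simp
qed

definition Wf :: "complex \<Rightarrow> complex \<Rightarrow> real" where
  "Wf X Y = (1 - dotc X Y)^2 - (1 - (cmod X)^2) * (1 - (cmod Y)^2)"

lemma Wf_pos: assumes "cmod X < 1" "cmod Y < 1" "X \<noteq> Y" shows "Wf X Y > 0"
proof -
  obtain a b where X: "X = Complex a b" by (metis complex.exhaust)
  obtain c d where Y: "Y = Complex c d" by (metis complex.exhaust)
  have ab: "a^2 + b^2 < 1" using assms(1) unfolding X cmod_def by simp
  have ne: "(c - a)^2 + (d - b)^2 > 0" using assms(3) unfolding X Y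
    by (smt (verit) complex.inject power2_less_eq_zero_iff sum_power2_gt_zero_iff right_minus_eq)
  have W: "Wf X Y = ((c - a)^2 + (d - b)^2) - (a * (d - b) - b * (c - a))^2"
    unfolding Wf_def dotc_def X Y cmod_power2 by simp algebra
  have cs: "(a * (d - b) - b * (c - a))^2 = (a^2 + b^2) * ((c - a)^2 + (d - b)^2) - (a * (c - a) + b * (d - b))^2"
    by algebra
  have "(a^2 + b^2) * ((c - a)^2 + (d - b)^2) < (c - a)^2 + (d - b)^2"
    using ab ne by (simp add: mult_less_cancel_right1)
  thus ?thesis unfolding W cs by (smt (verit) zero_le_power2)
qed

lemma Delta_cosh: assumes "cmod X < 1" "cmod Y < 1" "X \<noteq> Y"
  shows "Delta' X Y > 0" "(cosh (Delta' X Y))^2 = 1 + (1 - (cmod X)^2) * (1 - (cmod Y)^2) / Wf X Y"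
proof -
  define d where "d = klein_dist X Y"
  define C where "C = cosh d"
  define p where "p = (1 - (cmod X)^2) * (1 - (cmod Y)^2)"
  have xx: "(cmod X)^2 < 1" using assms by (simp add: abs_square_less_1)
  have yy: "(cmod Y)^2 < 1" using assms by (simp add: abs_square_less_1)
  have p0: "p > 0" unfolding p_def using xx yy by simp
  have W0: "Wf X Y > 0" using Wf_pos assms by blast
  have C: "C = (1 - dotc X Y) / (sqrt (1 - (cmod X)^2) * sqrt (1 - (cmod Y)^2))"
    unfolding C_def d_def using klein_cosh assms by blast
  have d0: "d \<ge> 0" unfolding d_def using klein_cosh assms by blast
  have C2: "C^2 = (1 - dotc X Y)^2 / p"
    unfolding C p_def using xx yy by (simp add: power_divide power_mult_distrib real_sqrt_mult[symmetric])
  have C21: "C^2 - 1 = Wf X Y / p" unfolding C2 Wf_def p_def[symmetric] using p0 by (simp add: field_simps)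
  moreover have "Wf X Y / p > 0" using W0 p0 by simp
  ultimately have "C^2 > 1" by linarith
  hence "C \<noteq> 1" by auto
  hence "d \<noteq> 0" unfolding C_def by auto
  hence dpos: "d > 0" using d0 by simp
  define x where "x = exp d"
  have x1: "x > 1" unfolding x_def using dpos by simp
  define y where "y = (x + 1) / (x - 1)"
  have y1: "y > 1" unfolding y_def using x1 by (simp add: field_simps)
  have D: "Delta' X Y = ln y" unfolding Delta'_def y_def x_def d_def ..
  show "Delta' X Y > 0" unfolding D using y1 by simp
  have Cx: "C = (x^2 + 1) / (2 * x)" unfolding C_def cosh_field_def x_def
    by (simp add: exp_minus field_simps power2_eq_square)
  have cy0: "cosh (ln y) = (y + inverse y) / 2" using y1 by (simp add: cosh_ln_real)
  have cy: "cosh (ln y) = (x^2 + 1) / (x^2 - 1)"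
  proof -
    have xm: "x - 1 \<noteq> 0" "x + 1 \<noteq> 0" using x1 by auto
    have "1 * 1 < x * x" using mult_strict_mono[of 1 x 1 x] x1 by simp
    hence xx1: "x^2 - 1 \<noteq> 0" by (simp add: power2_eq_square)
    have e1: "y * (x - 1) = x + 1" unfolding y_def using xm by simp
    have e2: "inverse y * (x + 1) = x - 1" unfolding y_def using xm by simp
    have "(y + inverse y) / 2 * (x^2 - 1) = x^2 + 1" using e1 e2 by algebra
    thus ?thesis unfolding cy0 using xx1 by (simp add: eq_divide_eq)
  qed
  have gen: "\<And>a b z::real. b \<noteq> 0 \<Longrightarrow> z \<noteq> 0 \<Longrightarrow> a^2 - b^2 = 4 * z^2 \<Longrightarrow>
      (a / b)^2 * ((a / (2 * z))^2 - 1) = (a / (2 * z))^2"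
  proof -
    fix a b z :: real assume h: "b \<noteq> 0" "z \<noteq> 0" "a^2 - b^2 = 4 * z^2"
    have "(a / (2 * z))^2 - 1 = (a^2 - 4 * z^2) / (4 * z^2)" using h by (simp add: field_simps power2_eq_square)
    also have "\<dots> = b^2 / (4 * z^2)" using h(3) by (simp add: algebra_simps)
    finally show "(a / b)^2 * ((a / (2 * z))^2 - 1) = (a / (2 * z))^2" using h by (simp add: field_simps power2_eq_square)
  qed
  have "1 * 1 < x * x" using mult_strict_mono[of 1 x 1 x] x1 by simp
  hence xm2: "x^2 - 1 \<noteq> 0" by (simp add: power2_eq_square)
  have "(cosh (Delta' X Y))^2 * (C^2 - 1) = C^2"
    unfolding D cy Cx by (rule gen) (use xm2 x1 in \<open>auto simp: algebra_simps power2_eq_square\<close>)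
  hence "(cosh (Delta' X Y))^2 = C^2 / (C^2 - 1)" using \<open>C^2 > 1\<close> by (simp add: field_simps)
  also have "\<dots> = (1 - dotc X Y)^2 / Wf X Y" unfolding C21 unfolding C2 using p0 by simp
  also have "\<dots> = 1 + p / Wf X Y" unfolding Wf_def p_def[symmetric] using W0 p_def Wf_def
    by (simp add: field_simps)
  finally show "(cosh (Delta' X Y))^2 = 1 + (1 - (cmod X)^2) * (1 - (cmod Y)^2) / Wf X Y"
    unfolding p_def .
qed

definition FF :: "real \<Rightarrow> real \<Rightarrow> real \<Rightarrow> real \<Rightarrow> real \<Rightarrow> real \<Rightarrow> real \<Rightarrow> real" where
  "FF a b c d e f t = e * ((b + t*(d-b)) * (-(a*d-b*c)) - (c-a)) - f * ((a + t*(c-a)) * (-(a*d-b*c)) - (b-d))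
      + ((a + t*(c-a)) * (c-a) - (b + t*(d-b)) * (b-d))"

definition WW :: "real \<Rightarrow> real \<Rightarrow> real \<Rightarrow> real \<Rightarrow> real" where
  "WW a b c d = (1 - (a*c+b*d))^2 - (1-a^2-b^2)*(1-c^2-d^2)"

definition EE :: "real \<Rightarrow> real \<Rightarrow> real \<Rightarrow> real \<Rightarrow> real \<Rightarrow> real \<Rightarrow> real" where
  "EE a b c d e f = e*(b-d) + f*(c-a) + (a*d-b*c)"

lemma key_ident: "WW a b c d * (1 - (e*(a + t*(c-a)) + f*(b + t*(d-b))))^2
   - (WW a b c d * (1-e^2-f^2) + (EE a b c d e f)^2) * (1 - (a + t*(c-a))^2 - (b + t*(d-b))^2)
   = (FF a b c d e f t)^2"
  unfolding WW_def EE_def FF_def by algebra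

lemma FF_lin: "FF a b c d e f t = FF a b c d e f 0 + (FF a b c d e f 1 - FF a b c d e f 0) * t"
  unfolding FF_def by algebra

lemma FF_c1: "(FF a b c d e f 1 - FF a b c d e f 0)^2 =
   WW a b c d * (e*(c-a)+f*(d-b))^2 + (WW a b c d * (1-e^2-f^2) + (EE a b c d e f)^2) * ((c-a)^2+(d-b)^2)"
  unfolding WW_def EE_def FF_def by algebra

lemma cosh_sq_klein: assumes "cmod Z < 1" "cmod S < 1"
  shows "(cosh (klein_dist Z S))^2 = (1 - dotc Z S)^2 / ((1 - (cmod Z)^2) * (1 - (cmod S)^2))"
proof -
  have z: "1 - (cmod Z)^2 > 0" and s: "1 - (cmod S)^2 > 0" using assms by (simp_all add: abs_square_less_1)
  show ?thesis unfolding klein_cosh(1)[OF assms] using z s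
    by (simp add: power_divide power_mult_distrib)
qed

lemma cosh_le_from_sq: fixes u v :: real assumes "u \<ge> 0" "v \<ge> 0" "(cosh u)^2 \<le> (cosh v)^2"
  shows "u \<le> v"
proof -
  have "cosh u \<le> cosh v" using assms(3) by (rule power2_le_imp_le) simp
  thus ?thesis using assms cosh_real_nonneg_le_iff by blast
qed

lemma ratio_le: fixes W A B K m C :: real
  assumes "C = m / (A * B)" "W * m \<ge> K * B" "W > 0" "A > 0" "B > 0"
  shows "K / (W * A) \<le> C"
proof -
  have "K / (W * A) = (K * B) / (W * A * B)" using assms by simp
  also have "\<dots> \<le> (W * m) / (W * A * B)" using assms by (intro divide_right_mono) simp_all
  also have "\<dots> = m / (A * B)" using assms by simp
  finally show ?thesis using assms(1) by simp
qed

lemma ratio_eq: fixes W A B K m :: real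
  assumes "W * m = K * B" "W > 0" "A > 0" "B > 0"
  shows "m / (A * B) = K / (W * A)"
proof -
  have "m / (A * B) = (W * m) / (W * A * B)" using assms(2-4) by simp
  also have "\<dots> = (K * B) / (W * A * B)" unfolding assms(1) ..
  also have "\<dots> = K / (W * A)" using assms(2-4) by simp
  finally show ?thesis .
qed

lemma delta_cosh:
  assumes X: "cmod X < 1" and Y: "cmod Y < 1" and Z: "cmod Z < 1" and XY: "X \<noteq> Y"
  shows "delta X Y Z \<ge> 0"
    and "(cosh (delta X Y Z))^2 = 1 + (tri X Y Z)^2 / (Wf X Y * (1 - (cmod Z)^2))"
proof -
  define a where "a = Re X" define b where "b = Im X"
  define c where "c = Re Y" define d where "d = Im Y"
  define e where "e = Re Z" define f where "f = Im Z"
  define W where "W = Wf X Y"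
  define E where "E = EE a b c d e f"
  define K where "K = W * (1 - e^2 - f^2) + E^2"
  define pt where "pt t = X + complex_of_real t * (Y - X)" for t
  define L where "L = line_through X Y \<inter> KleinDisk"
  define g where "g S = klein_dist Z S" for S
  have W0: "W > 0" unfolding W_def using Wf_pos X Y XY by blast
  have WW: "W = WW a b c d" unfolding W_def Wf_def WW_def dotc_def a_def b_def c_def d_def cmod_power2 by (simp add: algebra_simps)
  have triE: "tri X Y Z = E" unfolding tri_def E_def EE_def a_def b_def c_def d_def e_def f_def
    by (simp add: algebra_simps)
  have zz: "1 - (cmod Z)^2 = 1 - e^2 - f^2" unfolding e_def f_def cmod_power2 by simp
  have z0: "1 - e^2 - f^2 > 0" using Z unfolding zz[symmetric] by (simp add: abs_square_less_1)
  have K0: "K > 0" unfolding K_def using W0 z0 by (simp add: add_pos_nonneg)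
  have Re_pt: "Re (pt t) = a + t*(c-a)" and Im_pt: "Im (pt t) = b + t*(d-b)" for t
    unfolding pt_def a_def b_def c_def d_def by simp_all
  have dot_pt: "dotc Z (pt t) = e*(a + t*(c-a)) + f*(b + t*(d-b))" for t
    unfolding dotc_def Re_pt Im_pt e_def f_def ..
  have n_pt: "1 - (cmod (pt t))^2 = 1 - (a + t*(c-a))^2 - (b + t*(d-b))^2" for t
    unfolding cmod_power2 Re_pt Im_pt by simp
  have L_iff: "S \<in> L \<longleftrightarrow> (\<exists>t. S = pt t) \<and> cmod S < 1" for S
    unfolding L_def line_through_def KleinDisk_def pt_def by auto
  define V where "V = K / (W * (1 - e^2 - f^2))"
  have key: "W * (1 - dotc Z (pt t))^2 - K * (1 - (cmod (pt t))^2) = (FF a b c d e f t)^2" for t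
    unfolding dot_pt n_pt K_def E_def WW by (rule key_ident)
  have lower: "(cosh (g S))^2 \<ge> V" if "S \<in> L" for S
  proof -
    have "(\<exists>t. S = pt t) \<and> cmod S < 1" using that unfolding L_iff .
    then obtain t where St: "S = pt t" and S1: "cmod S < 1" by blast
    have s0: "1 - (cmod S)^2 > 0" using S1 by (simp add: abs_square_less_1)
    have "(cosh (g S))^2 = (1 - dotc Z S)^2 / ((1 - e^2 - f^2) * (1 - (cmod S)^2))"
      unfolding g_def cosh_sq_klein[OF Z S1] zz ..
    moreover have "W * (1 - dotc Z S)^2 \<ge> K * (1 - (cmod S)^2)"
    proof -
      have "W * (1 - dotc Z S)^2 - K * (1 - (cmod S)^2) = (FF a b c d e f t)^2"
        using key[of t] unfolding St .
      moreover have "(FF a b c d e f t)^2 \<ge> 0" by simp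
      ultimately show ?thesis by linarith
    qed
    ultimately show ?thesis unfolding V_def using W0 z0 s0 by (rule ratio_le)
  qed
  define F0 where "F0 = FF a b c d e f 0"
  define c1 where "c1 = FF a b c d e f 1 - FF a b c d e f 0"
  have "(c - a)^2 + (d - b)^2 > 0"
  proof -
    have "X \<noteq> Y" by fact
    hence "a \<noteq> c \<or> b \<noteq> d" unfolding a_def b_def c_def d_def by (simp add: complex_eq_iff)
    thus ?thesis by (smt (verit) sum_power2_gt_zero_iff)
  qed
  hence "c1^2 > 0" unfolding c1_def FF_c1 using W0 K0 unfolding WW[symmetric] K_def[symmetric] E_def[symmetric]
    by (simp add: add_nonneg_pos)
  hence c10: "c1 \<noteq> 0" by auto
  define t0 where "t0 = - F0 / c1"
  have Ft0: "FF a b c d e f t0 = 0" using FF_lin[of a b c d e f t0] c10 unfolding t0_def F0_def c1_def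
    by (simp add: field_simps)
  define S0 where "S0 = pt t0"
  have eq0: "W * (1 - dotc Z S0)^2 = K * (1 - (cmod S0)^2)" using key[of t0] Ft0 unfolding S0_def by simp
  have S01: "cmod S0 < 1"
  proof (rule ccontr)
    assume "\<not> cmod S0 < 1"
    hence "1 - (cmod S0)^2 \<le> 0" by (simp add: abs_square_le_1 not_less)
    hence "W * (1 - dotc Z S0)^2 \<le> 0" using eq0 K0 by (simp add: mult_nonneg_nonpos)
    hence m0: "1 - dotc Z S0 = 0" using W0 by (smt (verit) mult_pos_pos zero_less_power2)
    hence "K * (1 - (cmod S0)^2) = 0" using eq0 by simp
    hence n1: "(cmod S0)^2 = 1" using K0 by simp
    have "(dotc Z S0)^2 \<le> (cmod Z)^2 * (cmod S0)^2"
    proof -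
      have "(cmod Z)^2 * (cmod S0)^2 - (dotc Z S0)^2 = (Re Z * Im S0 - Im Z * Re S0)^2"
        unfolding dotc_def cmod_power2 by algebra
      thus ?thesis by (smt (verit) zero_le_power2)
    qed
    moreover have "(cmod Z)^2 < 1" using Z by (simp add: abs_square_less_1)
    ultimately show False using m0 n1 Z by simp
  qed
  have S0L: "S0 \<in> L" unfolding L_iff using S01 S0_def by blast
  have s00: "1 - (cmod S0)^2 > 0" using S01 by (simp add: abs_square_less_1)
  have gS0: "(cosh (g S0))^2 = V"
  proof -
    have "(cosh (g S0))^2 = (1 - dotc Z S0)^2 / ((1 - e^2 - f^2) * (1 - (cmod S0)^2))"
      unfolding g_def cosh_sq_klein[OF Z S01] zz ..
    also have "\<dots> = V" unfolding V_def using eq0 W0 z0 s00 by (rule ratio_eq)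
    finally show ?thesis .
  qed
  have gnn: "g S \<ge> 0" if "S \<in> L" for S
  proof -
    have "cmod S < 1" using that unfolding L_iff by blast
    thus ?thesis unfolding g_def using klein_cosh(2)[OF Z] by blast
  qed
  have dInf: "delta X Y Z = g S0"
  proof -
    have "delta X Y Z = Inf (g ` L)" unfolding delta_def L_def g_def ..
    also have "\<dots> = g S0"
    proof (rule cInf_eq_minimum)
      show "g S0 \<in> g ` L" using S0L by blast
      fix y assume "y \<in> g ` L"
      then obtain S where S: "S \<in> L" "y = g S" by blast
      show "g S0 \<le> y" unfolding S(2)
        by (rule cosh_le_from_sq) (use gnn S0L S lower gS0 in auto)
    qed
    finally show ?thesis .
  qed
  show "delta X Y Z \<ge> 0" unfolding dInf using gnn S0L by blast
  have "V = 1 + E^2 / (W * (1 - e^2 - f^2))" unfolding V_def K_def add_divide_distrib using W0 z0 by simp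
  thus "(cosh (delta X Y Z))^2 = 1 + (tri X Y Z)^2 / (Wf X Y * (1 - (cmod Z)^2))"
    unfolding dInf gS0 triE W_def[symmetric] zz .
qed

lemma count_main: assumes "cmod P < 1" "cmod Q < 1" "cmod R < 1"
  shows "finite (circ_inscribed_triangles P Q R) \<and> card (circ_inscribed_triangles P Q R) =
    (if (tri P Q R)^2 < Pi3 P Q R then 0 else if (tri P Q R)^2 = Pi3 P Q R then 1 else 2)"
proof -
  have F: "FixS P Q R = {A. cmod A = 1 \<and> Re (gam P Q R * A) = kk P Q R}"
    unfolding FixS_def using fix_iff assms by blast
  have S: "finite (FixS P Q R) \<and> card (FixS P Q R) =
    (if (cmod (gam P Q R))^2 < (kk P Q R)^2 then 0 else if (cmod (gam P Q R))^2 = (kk P Q R)^2 then 1 else 2)"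
    unfolding F by (rule S_card) (rule gk_nz[OF assms(1,2)])
  have ge: "(cmod (gam P Q R))^2 - (kk P Q R)^2 = (tri P Q R)^2 - Pi3 P Q R" by (rule gk_ident)
  have c1: "(cmod (gam P Q R))^2 < (kk P Q R)^2 \<longleftrightarrow> (tri P Q R)^2 < Pi3 P Q R" using ge by linarith
  have c2: "(cmod (gam P Q R))^2 = (kk P Q R)^2 \<longleftrightarrow> (tri P Q R)^2 = Pi3 P Q R" using ge by linarith
  have eq: "circ_inscribed_triangles P Q R = tri_of P Q ` FixS P Q R" using circ_eq assms by blast
  have inj: "inj_on (tri_of P Q) (FixS P Q R)" using tri_inj assms by blast
  show ?thesis unfolding eq using S inj c1 c2 by (simp add: card_image)
qed

lemma cosh_cmp: fixes u v :: real assumes "u \<ge> 0" "v \<ge> 0"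
  shows "u < v \<longleftrightarrow> (cosh u)^2 < (cosh v)^2" and "u = v \<longleftrightarrow> (cosh u)^2 = (cosh v)^2"
proof -
  have "u < v \<longleftrightarrow> cosh u < cosh v" using assms cosh_real_nonneg_less_iff by blast
  also have "\<dots> \<longleftrightarrow> (cosh u)^2 < (cosh v)^2"
    by (metis cosh_real_nonneg power2_less_imp_less power_strict_mono zero_less_numeral)
  finally show "u < v \<longleftrightarrow> (cosh u)^2 < (cosh v)^2" .
  have "u = v \<longleftrightarrow> cosh u = cosh v" using assms by simp
  also have "\<dots> \<longleftrightarrow> (cosh u)^2 = (cosh v)^2"
    by (metis cosh_real_nonneg power2_eq_iff_nonneg)
  finally show "u = v \<longleftrightarrow> (cosh u)^2 = (cosh v)^2" .
qed

lemma side_cmp: assumes X: "cmod X < 1" and Y: "cmod Y < 1" and Z: "cmod Z < 1" and XY: "X \<noteq> Y"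
  shows "delta X Y Z < Delta' X Y \<longleftrightarrow> (tri X Y Z)^2 < Pi3 X Y Z"
    and "delta X Y Z = Delta' X Y \<longleftrightarrow> (tri X Y Z)^2 = Pi3 X Y Z"
proof -
  define W where "W = Wf X Y"
  define ax where "ax = 1 - (cmod X)^2"
  define ay where "ay = 1 - (cmod Y)^2"
  define az where "az = 1 - (cmod Z)^2"
  have W0: "W > 0" unfolding W_def using Wf_pos X Y XY by blast
  have az0: "az > 0" unfolding az_def using Z by (simp add: abs_square_less_1)
  have d0: "delta X Y Z \<ge> 0" using delta_cosh(1)[OF X Y Z XY] .
  have D0: "Delta' X Y \<ge> 0" using Delta_cosh(1)[OF X Y XY] by simp
  have cd: "(cosh (delta X Y Z))^2 = 1 + (tri X Y Z)^2 / (W * az)"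
    using delta_cosh(2)[OF X Y Z XY] unfolding W_def az_def .
  have cD: "(cosh (Delta' X Y))^2 = 1 + ax * ay / W"
    using Delta_cosh(2)[OF X Y XY] unfolding W_def ax_def ay_def .
  have Pi: "Pi3 X Y Z = ax * ay * az" unfolding Pi3_def ax_def ay_def az_def ..
  have l: "(tri X Y Z)^2 / (W * az) < ax * ay / W \<longleftrightarrow> (tri X Y Z)^2 < ax * ay * az"
  proof -
    have c: "W * az > 0" using W0 az0 by simp
    show ?thesis using W0 az0 c by (simp add: field_simps)
  qed
  have e: "(tri X Y Z)^2 / (W * az) = ax * ay / W \<longleftrightarrow> (tri X Y Z)^2 = ax * ay * az"
  proof -
    have c: "W * az > 0" using W0 az0 by simp
    show ?thesis using W0 az0 c by (simp add: field_simps)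
  qed
  show "delta X Y Z < Delta' X Y \<longleftrightarrow> (tri X Y Z)^2 < Pi3 X Y Z"
    unfolding cosh_cmp(1)[OF d0 D0] cd cD Pi using l by simp
  show "delta X Y Z = Delta' X Y \<longleftrightarrow> (tri X Y Z)^2 = Pi3 X Y Z"
    unfolding cosh_cmp(2)[OF d0 D0] cd cD Pi using e by simp
qed

lemma tri_cyc: "tri R P Q = tri P Q R" unfolding tri_def by simp
lemma Pi3_cyc: "Pi3 R P Q = Pi3 P Q R" unfolding Pi3_def by simp

theorem proposition3p2:
  fixes P Q R :: complex
  assumes "P \<in> KleinDisk" "Q \<in> KleinDisk" "R \<in> KleinDisk"
    and "\<not> collinear {P, Q, R}"
  shows "finite (circ_inscribed_triangles P Q R) \<and>
         card (circ_inscribed_triangles P Q R) =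
           (if omega P Q R < 1 then 0 else if omega P Q R = 1 then 1 else 2)"
proof -
  have p: "cmod P < 1" and q: "cmod Q < 1" and r: "cmod R < 1" using assms(1-3) unfolding KleinDisk_def by auto
  have PQ: "P \<noteq> Q" using assms(4) by (metis collinear_2 insert_absorb2)
  have QR: "Q \<noteq> R" using assms(4) by (metis collinear_2 insert_absorb2 insert_commute)
  have RP: "R \<noteq> P" using assms(4) by (metis collinear_2 insert_absorb2 insert_commute)
  define T where "T = (tri P Q R)^2"
  define Pp where "Pp = Pi3 P Q R"
  have t2: "(tri R P Q)^2 = T" "(tri Q R P)^2 = T" unfolding T_def using tri_cyc by metis+
  have p2: "Pi3 R P Q = Pp" "Pi3 Q R P = Pp" unfolding Pp_def using Pi3_cyc by metis+
  have s1l: "delta P Q R < Delta' P Q \<longleftrightarrow> T < Pp" and s1e: "delta P Q R = Delta' P Q \<longleftrightarrow> T = Pp"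
    using side_cmp[OF p q r PQ] unfolding T_def Pp_def by auto
  have s2l: "delta R P Q < Delta' R P \<longleftrightarrow> T < Pp" and s2e: "delta R P Q = Delta' R P \<longleftrightarrow> T = Pp"
    using side_cmp[OF r p q RP] unfolding t2 p2 by auto
  have s3l: "delta Q R P < Delta' Q R \<longleftrightarrow> T < Pp" and s3e: "delta Q R P = Delta' Q R \<longleftrightarrow> T = Pp"
    using side_cmp[OF q r p QR] unfolding t2 p2 by auto
  define N where "N = delta P Q R + delta R P Q + delta Q R P"
  define Dn where "Dn = Delta' P Q + Delta' R P + Delta' Q R"
  have Dn0: "Dn > 0" unfolding Dn_def using Delta_cosh(1)[OF p q PQ] Delta_cosh(1)[OF r p RP]
    Delta_cosh(1)[OF q r QR] by simp
  have om: "omega P Q R = N / Dn" unfolding omega_def N_def Dn_def ..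
  have cnt: "finite (circ_inscribed_triangles P Q R) \<and> card (circ_inscribed_triangles P Q R) =
    (if T < Pp then 0 else if T = Pp then 1 else 2)" using count_main[OF p q r] unfolding T_def Pp_def .
  have o1: "omega P Q R < 1 \<longleftrightarrow> T < Pp"
  proof -
    have "omega P Q R < 1 \<longleftrightarrow> N < Dn" unfolding om using Dn0 by simp
    also have "\<dots> \<longleftrightarrow> T < Pp"
    proof
      assume "N < Dn"
      show "T < Pp"
      proof (rule ccontr)
        assume "\<not> T < Pp"
        hence "delta P Q R \<ge> Delta' P Q" "delta R P Q \<ge> Delta' R P" "delta Q R P \<ge> Delta' Q R"
          using s1l s2l s3l by auto
        thus False using \<open>N < Dn\<close> unfolding N_def Dn_def by linarith
      qed
    next
      assume "T < Pp"
      thus "N < Dn" using s1l s2l s3l unfolding N_def Dn_def by auto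
    qed
    finally show ?thesis .
  qed
  have o2: "omega P Q R = 1 \<longleftrightarrow> T = Pp"
  proof -
    have "omega P Q R = 1 \<longleftrightarrow> N = Dn" unfolding om using Dn0 by force
    also have "\<dots> \<longleftrightarrow> T = Pp"
    proof
      assume h: "N = Dn"
      show "T = Pp"
      proof (rule ccontr)
        assume ne: "T \<noteq> Pp"
        show False
        proof (cases "T < Pp")
          case True
          hence "N < Dn" using s1l s2l s3l unfolding N_def Dn_def by auto
          thus False using h by simp
        next
          case False
          hence "delta P Q R > Delta' P Q" "delta R P Q > Delta' R P" "delta Q R P > Delta' Q R"
            using s1l s2l s3l s1e s2e s3e ne by (auto simp: not_less order.order_iff_strict)
          thus False using h unfolding N_def Dn_def by linarith
        qed
      qed
    next
      assume "T = Pp"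
      thus "N = Dn" using s1e s2e s3e unfolding N_def Dn_def by auto
    qed
    finally show ?thesis .
  qed
  show ?thesis using cnt o1 o2 by simp
qed

end
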